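(* Let $f,g:\mathbb{R}^n\to\mathbb{R}^+$ be log-concave functions and $\lambda\in(0,1)$. Then \[ \int_{\mathbb{R}^n}\Delta_\lambda^{f,g}\;\int_{\mathbb{R}^n} f^{\lambda}g^{1-\lambda}\le \int_{\mathbb{R}^n}f\int_{\mathbb{R}^n}g. \]
   Context: For $\lambda\in(0,1)$ and $f,g:\mathbb{R}^n\to\mathbb{R}^+$, the $\lambda$-difference function $\Delta_\lambda^{f,g}:\mathbb{R}^n\to\mathbb{R}^+$ is defined by \[ \Delta_\lambda^{f,g}(z)=\sup_{(1-\lambda)x+\lambda y=z} f^{1-\lambda}\!\left(\tfrac{x}{1-\lambda}\right)g^{\lambda}\!\left(\tfrac{-y}{\lambda}\right). \] A function $f\ge0$ is log-concave if $f=e^{-\varphi}$ for a convex $\varphi:\mathbb{R}^n\to\mathbb{R}\cup\{+\infty\}$. *)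

theory Defs
  imports "HOL-Analysis.Analysis"
begin

definition log_concave :: "('a::real_vector \<Rightarrow> real) \<Rightarrow> bool" where
  "log_concave f \<longleftrightarrow> (\<exists>\<phi> :: 'a \<Rightarrow> ereal.
      (\<forall>x. \<phi> x \<noteq> -\<infinity>) \<and>
      (\<forall>x y t. 0 < t \<and> t < 1 \<longrightarrow>
         \<phi> ((1 - t) *\<^sub>R x + t *\<^sub>R y) \<le> ereal (1 - t) * \<phi> x + ereal t * \<phi> y) \<and>
      (\<forall>x. f x = (if \<phi> x = \<infinity> then 0 else exp (- real_of_ereal (\<phi> x)))))"

text \<open>The lambda-difference function, valued in [0,infinity] (the supremum may be infinite).\<close>
definition diff_fun :: "real \<Rightarrow> ('a::real_vector \<Rightarrow> real) \<Rightarrow> ('a \<Rightarrow> real) \<Rightarrow> 'a \<Rightarrow> ennreal" where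
  "diff_fun l f g z = (SUP p \<in> {(x, y). (1 - l) *\<^sub>R x + l *\<^sub>R y = z}.
      ennreal (f ((1 / (1 - l)) *\<^sub>R fst p) powr (1 - l) * g ((- 1 / l) *\<^sub>R snd p) powr l))"

end

theory Submission imports Defs begin

lemma lc_nonneg: assumes "log_concave f" shows "0 \<le> f x"
  using assms unfolding log_concave_def by auto

lemma lc_ineq:
  assumes "log_concave f" "0 < t" "t < 1"
  shows "f x powr (1-t) * f y powr t \<le> f ((1 - t) *\<^sub>R x + t *\<^sub>R y)"
proof -
  obtain \<phi> :: "'a \<Rightarrow> ereal" where ninf: "\<forall>x. \<phi> x \<noteq> -\<infinity>"
    and cv: "\<forall>x y t. 0 < t \<and> t < 1 \<longrightarrow>
         \<phi> ((1 - t) *\<^sub>R x + t *\<^sub>R y) \<le> ereal (1 - t) * \<phi> x + ereal t * \<phi> y"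
    and fe: "\<forall>x. f x = (if \<phi> x = \<infinity> then 0 else exp (- real_of_ereal (\<phi> x)))"
    using assms(1) unfolding log_concave_def by blast
  let ?m = "(1 - t) *\<^sub>R x + t *\<^sub>R y"
  have fm: "0 \<le> f ?m" using fe by simp
  show ?thesis
  proof (cases "\<phi> x = \<infinity> \<or> \<phi> y = \<infinity>")
    case True
    then have "f x = 0 \<or> f y = 0" using fe by auto
    then show ?thesis using fm by auto
  next
    case False
    then obtain a b where ab: "\<phi> x = ereal a" "\<phi> y = ereal b"
      using ninf by (metis ereal_cases)
    have le: "\<phi> ?m \<le> ereal ((1-t)*a + t*b)"
      using cv assms(2,3) ab by (metis plus_ereal.simps(1) times_ereal.simps(1))
    then obtain c where c: "\<phi> ?m = ereal c" using ninf
      by (metis ereal_cases ereal_infty_less_eq(1) PInfty_neq_ereal(1))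
    have cle: "c \<le> (1-t)*a + t*b" using le c by simp
    have "f x powr (1-t) * f y powr t = exp (-a) powr (1-t) * exp (-b) powr t"
      using fe ab by simp
    also have "\<dots> = exp (-((1-t)*a + t*b))"
      by (simp add: powr_def exp_add[symmetric] algebra_simps)
    also have "\<dots> \<le> exp (-c)" using cle by simp
    also have "\<dots> = f ?m" using fe c by simp
    finally show ?thesis .
  qed
qed

lemma convex_sets_lebesgue:
  fixes S :: "'a::euclidean_space set"
  assumes "convex S" shows "S \<in> sets lebesgue"
proof -
  have "S - interior S \<subseteq> frontier S"
    using closure_subset by (auto simp: frontier_def)
  then have "negligible (S - interior S)"
    using negligible_subset negligible_convex_frontier[OF assms] by blast
  then have "S - interior S \<in> sets lebesgue" by (rule negligible_imp_sets)
  moreover have "interior S \<in> sets lebesgue"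
    by (rule sets_completionI_sets) simp
  ultimately have "(S - interior S) \<union> interior S \<in> sets lebesgue" by (rule sets.Un)
  moreover have "(S - interior S) \<union> interior S = S" using interior_subset by blast
  ultimately show ?thesis by simp
qed

lemma lc_measurable:
  fixes f :: "'a::euclidean_space \<Rightarrow> real"
  assumes lc: "log_concave f" shows "f \<in> borel_measurable lebesgue"
  unfolding borel_measurable_iff_greater
proof
  fix a :: real
  have "convex {w. a < f w}"
  proof (cases "a < 0")
    case True
    then have "{w. a < f w} = UNIV" using lc_nonneg[OF lc] by (auto intro: less_le_trans)
    then show ?thesis by simp
  next
    case False
    show ?thesis unfolding convex_def
    proof (intro ballI allI impI)
      fix x y u v assume x: "x \<in> {w. a < f w}" and y: "y \<in> {w. a < f w}"
        and uv: "0 \<le> (u::real)" "0 \<le> v" "u + v = 1"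
      show "u *\<^sub>R x + v *\<^sub>R y \<in> {w. a < f w}"
      proof (cases "v = 0 \<or> u = 0")
        case True then show ?thesis using x y uv by auto
      next
        case F: False
        then have t: "0 < v" "v < 1" "u = 1 - v" using uv by auto
        have "a powr (1-v) * a powr v < f x powr (1-v) * f y powr v"
          using x y t False
          by (intro mult_strict_mono powr_less_mono2) auto
        also have "\<dots> \<le> f (u *\<^sub>R x + v *\<^sub>R y)"
          using lc_ineq[OF lc t(1,2)] t(3) by simp
        finally have "a powr (1-v) * a powr v < f (u *\<^sub>R x + v *\<^sub>R y)" .
        moreover have "a powr (1-v) * a powr v = a"
          using False by (simp add: powr_add[symmetric])
        ultimately show ?thesis by simp
      qed
    qed
  qed
  then show "{w \<in> space lebesgue. a < f w} \<in> sets lebesgue"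
    using convex_sets_lebesgue by auto
qed

lemma nn_integral_cmult_le:
  "c * integral\<^sup>N M f \<le> (\<integral>\<^sup>+x. c * f x \<partial>M)"
proof -
  have "c * integral\<^sup>N M f = (SUP g\<in>{g. simple_function M g \<and> g \<le> f}. c * integral\<^sup>S M g)"
    by (simp add: nn_integral_def SUP_mult_left_ennreal)
  also have "\<dots> \<le> (\<integral>\<^sup>+x. c * f x \<partial>M)"
  proof (rule SUP_least)
    fix g assume g: "g \<in> {g. simple_function M g \<and> g \<le> f}"
    then have sg: "simple_function M (\<lambda>x. c * g x)" by (auto intro: simple_function_mult)
    have "c * integral\<^sup>S M g = integral\<^sup>S M (\<lambda>x. c * g x)"
      using g by simp
    also have "\<dots> = (\<integral>\<^sup>+x. c * g x \<partial>M)"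
      using nn_integral_eq_simple_integral[OF sg] by simp
    also have "\<dots> \<le> (\<integral>\<^sup>+x. c * f x \<partial>M)"
      using g by (intro nn_integral_mono) (auto simp: le_fun_def intro: mult_left_mono)
    finally show "c * integral\<^sup>S M g \<le> (\<integral>\<^sup>+x. c * f x \<partial>M)" .
  qed
  finally show ?thesis .
qed

lemma nn_integral_transl:
  fixes F :: "'a::euclidean_space \<Rightarrow> ennreal"
  assumes [measurable]: "F \<in> borel_measurable borel"
  shows "(\<integral>\<^sup>+w. F (c + w) \<partial>lborel) = integral\<^sup>N lborel F"
proof -
  have "integral\<^sup>N lborel F = integral\<^sup>N (distr lborel borel ((+) c)) F"
    by (simp add: lborel_distr_plus)
  also have "\<dots> = (\<integral>\<^sup>+w. F (c + w) \<partial>lborel)"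
    by (rule nn_integral_distr) auto
  finally show ?thesis by simp
qed

lemma majorant:
  fixes f :: "'a::euclidean_space \<Rightarrow> real"
  assumes "f \<in> borel_measurable lebesgue"
  shows "\<exists>A. A \<in> borel_measurable borel \<and> (\<forall>x. ennreal (f x) \<le> A x) \<and>
     integral\<^sup>N lborel A = (\<integral>\<^sup>+x. ennreal (f x) \<partial>lborel)"
proof -
  obtain f' where f': "f' \<in> borel_measurable lborel" and ae: "AE x in lborel. f x = f' x"
    using completion_ex_borel_measurable_real[OF assms] by blast
  obtain N where N: "N \<in> null_sets lborel" "{x\<in>space lborel. \<not> f x = f' x} \<subseteq> N"
    using ae by (elim AE_E) blast
  define A where "A x = (if x \<in> N then \<infinity> else ennreal (f' x))" for x
  have Nb: "N \<in> sets borel" using N(1) by auto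
  have "A \<in> borel_measurable lborel"
    unfolding A_def using Nb f' by measurable
  then have "A \<in> borel_measurable borel" by simp
  moreover have "\<forall>x. ennreal (f x) \<le> A x" using N(2) by (force simp: A_def)
  moreover have "AE x in lborel. A x = ennreal (f x)"
    using AE_not_in[OF N(1)] ae by eventually_elim (auto simp: A_def)
  then have "integral\<^sup>N lborel A = (\<integral>\<^sup>+x. ennreal (f x) \<partial>lborel)"
    by (rule nn_integral_cong_AE)
  ultimately show ?thesis by blast
qed

lemma claim2:
  fixes A B :: "'a::euclidean_space \<Rightarrow> ennreal" and l :: real
  assumes [measurable]: "A \<in> borel_measurable borel" "B \<in> borel_measurable borel"
  shows "(\<integral>\<^sup>+z. (\<integral>\<^sup>+t. A (l *\<^sub>R t + z) * B ((1-l) *\<^sub>R t - z) \<partial>lborel) \<partial>lborel)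
     = integral\<^sup>N lborel A * integral\<^sup>N lborel B"
proof -
  have "(\<integral>\<^sup>+z. (\<integral>\<^sup>+t. A (l *\<^sub>R t + z) * B ((1-l) *\<^sub>R t - z) \<partial>lborel) \<partial>lborel)
     = (\<integral>\<^sup>+t. (\<integral>\<^sup>+z. A (l *\<^sub>R t + z) * B ((1-l) *\<^sub>R t - z) \<partial>lborel) \<partial>lborel)"
    by (rule lborel_pair.Fubini'[symmetric]) measurable
  also have "\<dots> = (\<integral>\<^sup>+t. (\<integral>\<^sup>+u. A u * B (t - u) \<partial>lborel) \<partial>lborel)"
  proof (rule nn_integral_cong)
    fix t :: 'a
    have "(\<integral>\<^sup>+z. A (l *\<^sub>R t + z) * B ((1-l) *\<^sub>R t - z) \<partial>lborel)
        = (\<integral>\<^sup>+z. (\<lambda>u. A u * B (t - u)) (l *\<^sub>R t + z) \<partial>lborel)"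
      by (rule nn_integral_cong) (simp add: algebra_simps)
    also have "\<dots> = (\<integral>\<^sup>+u. A u * B (t - u) \<partial>lborel)"
      by (rule nn_integral_transl) measurable
    finally show "(\<integral>\<^sup>+z. A (l *\<^sub>R t + z) * B ((1-l) *\<^sub>R t - z) \<partial>lborel)
        = (\<integral>\<^sup>+u. A u * B (t - u) \<partial>lborel)" .
  qed
  also have "\<dots> = (\<integral>\<^sup>+u. (\<integral>\<^sup>+t. A u * B (t - u) \<partial>lborel) \<partial>lborel)"
    by (rule lborel_pair.Fubini') measurable
  also have "\<dots> = (\<integral>\<^sup>+u. A u * integral\<^sup>N lborel B \<partial>lborel)"
  proof (rule nn_integral_cong)
    fix u :: 'a
    have "(\<integral>\<^sup>+t. A u * B (t - u) \<partial>lborel) = A u * (\<integral>\<^sup>+t. B (t - u) \<partial>lborel)"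
      by (rule nn_integral_cmult) measurable
    also have "(\<integral>\<^sup>+t. B (t - u) \<partial>lborel) = (\<integral>\<^sup>+t. B (- u + t) \<partial>lborel)"
      by (simp add: algebra_simps)
    also have "\<dots> = integral\<^sup>N lborel B"
      by (rule nn_integral_transl) measurable
    finally show "(\<integral>\<^sup>+t. A u * B (t - u) \<partial>lborel) = A u * integral\<^sup>N lborel B" .
  qed
  also have "\<dots> = integral\<^sup>N lborel A * integral\<^sup>N lborel B"
    by (rule nn_integral_multc) measurable
  finally show ?thesis .
qed

lemma claim1:
  fixes f g :: "'a::euclidean_space \<Rightarrow> real" and A B :: "'a \<Rightarrow> ennreal" and l :: real
  assumes lf: "log_concave f" and lg: "log_concave g" and l: "0 < l" "l < 1"
    and [measurable]: "A \<in> borel_measurable borel" "B \<in> borel_measurable borel"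
    and Af: "\<And>x. ennreal (f x) \<le> A x" and Bg: "\<And>x. ennreal (g x) \<le> B x"
  shows "diff_fun l f g z * (\<integral>\<^sup>+x. ennreal (f x powr l * g x powr (1 - l)) \<partial>lborel)
     \<le> (\<integral>\<^sup>+t. A (l *\<^sub>R t + z) * B ((1-l) *\<^sub>R t - z) \<partial>lborel)"
  unfolding diff_fun_def SUP_mult_right_ennreal
proof (rule SUP_least)
  fix p assume "p \<in> {(x, y). (1 - l) *\<^sub>R x + l *\<^sub>R y = z}"
  then obtain x y where p: "p = (x, y)" and z: "z = (1 - l) *\<^sub>R x + l *\<^sub>R y" by auto
  define a where "a = (1 / (1 - l)) *\<^sub>R x"
  define b where "b = (- 1 / l) *\<^sub>R y"
  have ha: "(1 - l) *\<^sub>R a = x" using l by (simp add: a_def)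
  have hb: "l *\<^sub>R b = - y" using l by (simp add: b_def)
  define c where "c = f a powr (1 - l) * g b powr l"
  have c0: "0 \<le> c" by (simp add: c_def)
  have pw: "ennreal c * ennreal (f w powr l * g w powr (1 - l))
       \<le> A (l *\<^sub>R (x - y + w) + z) * B ((1-l) *\<^sub>R (x - y + w) - z)" for w
  proof -
    have e1: "l *\<^sub>R (x - y + w) + z = (1 - (1 - l)) *\<^sub>R w + (1 - l) *\<^sub>R a"
    proof -
      have "l *\<^sub>R (x - y + w) + z = l *\<^sub>R w + x" unfolding z by (simp add: algebra_simps)
      then show ?thesis using ha by simp
    qed
    have e2: "(1-l) *\<^sub>R (x - y + w) - z = (1 - l) *\<^sub>R w + l *\<^sub>R b"
      using hb z by (simp add: algebra_simps)
    have i1: "f w powr l * f a powr (1 - l) \<le> f (l *\<^sub>R (x - y + w) + z)"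
      using lc_ineq[OF lf, of "1 - l" w a] l e1 by simp
    have i2: "g w powr (1 - l) * g b powr l \<le> g ((1-l) *\<^sub>R (x - y + w) - z)"
      using lc_ineq[OF lg, of l w b] l e2 by simp
    have "c * (f w powr l * g w powr (1 - l))
        = (f w powr l * f a powr (1 - l)) * (g w powr (1 - l) * g b powr l)"
      by (simp add: c_def algebra_simps)
    also have "\<dots> \<le> f (l *\<^sub>R (x - y + w) + z) * g ((1-l) *\<^sub>R (x - y + w) - z)"
      using i1 i2 by (intro mult_mono) (auto simp: lc_nonneg[OF lf])
    finally have "ennreal (c * (f w powr l * g w powr (1 - l)))
        \<le> ennreal (f (l *\<^sub>R (x - y + w) + z) * g ((1-l) *\<^sub>R (x - y + w) - z))"
      by (rule ennreal_leI)
    also have "\<dots> = ennreal (f (l *\<^sub>R (x - y + w) + z)) * ennreal (g ((1-l) *\<^sub>R (x - y + w) - z))"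
      by (rule ennreal_mult) (auto simp: lc_nonneg[OF lf] lc_nonneg[OF lg])
    also have "\<dots> \<le> A (l *\<^sub>R (x - y + w) + z) * B ((1-l) *\<^sub>R (x - y + w) - z)"
      using Af Bg by (intro mult_mono) auto
    finally show ?thesis using c0 by (simp add: ennreal_mult[symmetric])
  qed
  have "ennreal c * (\<integral>\<^sup>+x. ennreal (f x powr l * g x powr (1 - l)) \<partial>lborel)
      \<le> (\<integral>\<^sup>+w. ennreal c * ennreal (f w powr l * g w powr (1 - l)) \<partial>lborel)"
    by (rule nn_integral_cmult_le)
  also have "\<dots> \<le> (\<integral>\<^sup>+w. (\<lambda>t. A (l *\<^sub>R t + z) * B ((1-l) *\<^sub>R t - z)) (x - y + w) \<partial>lborel)"
    by (rule nn_integral_mono) (use pw in simp)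
  also have "\<dots> = (\<integral>\<^sup>+t. A (l *\<^sub>R t + z) * B ((1-l) *\<^sub>R t - z) \<partial>lborel)"
    by (rule nn_integral_transl) measurable
  finally show "ennreal (f ((1 / (1 - l)) *\<^sub>R fst p) powr (1 - l) * g ((- 1 / l) *\<^sub>R snd p) powr l)
      * (\<integral>\<^sup>+x. ennreal (f x powr l * g x powr (1 - l)) \<partial>lborel)
     \<le> (\<integral>\<^sup>+t. A (l *\<^sub>R t + z) * B ((1-l) *\<^sub>R t - z) \<partial>lborel)"
    by (simp add: p c_def a_def b_def mult.commute)
qed

theorem theorem1p8:
  fixes f g :: "'a::euclidean_space \<Rightarrow> real" and l :: real
  assumes "log_concave f" and "log_concave g"
    and "0 < l" and "l < 1"
  shows "(\<integral>\<^sup>+ z. diff_fun l f g z \<partial>lebesgue) *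
           (\<integral>\<^sup>+ x. ennreal (f x powr l * g x powr (1 - l)) \<partial>lebesgue)
         \<le> (\<integral>\<^sup>+ x. ennreal (f x) \<partial>lebesgue) * (\<integral>\<^sup>+ x. ennreal (g x) \<partial>lebesgue)"
proof -
  obtain A where A [measurable]: "A \<in> borel_measurable borel" and Af: "\<forall>x. ennreal (f x) \<le> A x"
    and iA: "integral\<^sup>N lborel A = (\<integral>\<^sup>+x. ennreal (f x) \<partial>lborel)"
    using majorant[OF lc_measurable[OF assms(1)]] by blast
  obtain B where B [measurable]: "B \<in> borel_measurable borel" and Bg: "\<forall>x. ennreal (g x) \<le> B x"
    and iB: "integral\<^sup>N lborel B = (\<integral>\<^sup>+x. ennreal (g x) \<partial>lborel)"
    using majorant[OF lc_measurable[OF assms(2)]] by blast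
  let ?I = "\<integral>\<^sup>+x. ennreal (f x powr l * g x powr (1 - l)) \<partial>lborel"
  have "(\<integral>\<^sup>+ z. diff_fun l f g z \<partial>lborel) * ?I = ?I * (\<integral>\<^sup>+ z. diff_fun l f g z \<partial>lborel)"
    by (simp add: mult.commute)
  also have "\<dots> \<le> (\<integral>\<^sup>+ z. ?I * diff_fun l f g z \<partial>lborel)"
    by (rule nn_integral_cmult_le)
  also have "\<dots> \<le> (\<integral>\<^sup>+z. (\<integral>\<^sup>+t. A (l *\<^sub>R t + z) * B ((1-l) *\<^sub>R t - z) \<partial>lborel) \<partial>lborel)"
    by (rule nn_integral_mono)
       (use claim1[OF assms A B] Af Bg in \<open>auto simp: mult.commute\<close>)
  also have "\<dots> = integral\<^sup>N lborel A * integral\<^sup>N lborel B"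
    by (rule claim2) (use A B in auto)
  finally show ?thesis by (simp add: nn_integral_completion iA iB)
qed

end
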